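(* The set $\mathfrak T=\mathfrak T_\infty\cup\mathfrak T_\boxplus$ of green graph rewriting rules finitely leads to the red spider.
   Context: Fix a positive integer $s$ and let $\mathbb S=\{1,\dots,s\}$ and $\bar{\mathbb S}=\mathbb S\cup\{\emptyset\}$ (elements of $\mathbb S$ are natural numbers, called labels). A green graph is a (finite or infinite) relational structure over the signature consisting of binary relations $H_i$, $i\in\bar{\mathbb S}$; an atom $H_i(x,y)$ is called an edge from $x$ to $y$ labelled $i$. A green graph rewriting rule is a first-order sentence of one of the following two kinds, where $I_1,I_2,I_3,I_4\in\bar{\mathbb S}\setminus\{3,4\}$, $I_1\neq I_3$ and $I_2\neq I_4$: (end-sharing rule) $[I_1,I_2\leftrightarrow I_3,I_4]_{\mathrm{end}}$ denotes $\forall x,x'\,\big[(\exists y\,H_{I_1}(x,y)\wedge H_{I_2}(x',y))\Leftrightarrow(\exists y\,H_{I_3}(x,y)\wedge H_{I_4}(x',y))\big]$; (start-sharing rule) $[I_1,I_2\leftrightarrow I_3,I_4]_{\mathrm{start}}$ denotes $\forall y,y'\,\big[(\exists x\,H_{I_1}(x,y)\wedge H_{I_2}(x,y'))\Leftrightarrow(\exists x\,H_{I_3}(x,y)\wedge H_{I_4}(x,y'))\big]$. A green graph contains a 1-2 pattern if it has edges $H_1(a,b)$ and $H_2(a',b)$ for some vertices $a,a',b$. A set $\mathcal T$ of green graph rewriting rules leads to the red spider (resp. finitely leads to the red spider) if every green graph (resp. every finite green graph) $\mathbb D$ with $\mathbb D\models\mathcal T$ which contains at least one edge labelled $\emptyset$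 also contains a 1-2 pattern. Labels: $\alpha,\beta_0,\eta_0$ are pairwise distinct even elements and $\beta_1,\eta_1$ distinct odd elements of $\mathbb S\setminus\{1,2,3,4\}$. Further, the 32 codes $\langle x,\theta,\delta,\epsilon\rangle$ with $x\in\{n,e,s,w\}$, $\theta\in\{\alpha,\beta\}$, $\delta\in\{d,\bar d\}$, $\epsilon\in\{b,\bar b\}$ are identified injectively with elements of $\mathbb S\setminus\{3,4,\alpha,\beta_0,\beta_1,\eta_0,\eta_1\}$, in such a way that $\langle n,\alpha,\bar d,\bar b\rangle=1$ and $\langle w,\alpha,\bar d,\bar b\rangle=2$. $\mathfrak T_\infty$ consists of the three rules $[\emptyset,\emptyset\leftrightarrow\alpha,\eta_1]_{\mathrm{end}}$, $[\emptyset,\eta_1\leftrightarrow\eta_0,\beta_1]_{\mathrm{start}}$, $[\emptyset,\eta_0\leftrightarrow\eta_1,\beta_0]_{\mathrm{end}}$. $\mathfrak T_\boxplus$ consists of the following 41 rules: $[\beta_0,\beta_0\leftrightarrow\langle n,\beta,d,b\rangle,\langle w,\beta,d,b\rangle]_{\mathrm{end}}$; $[\beta_1,\langle n,\beta,d,b\rangle\leftrightarrow\langle s,\beta,\bar d,b\rangle,\langle e,\beta,d,\bar b\rangle]_{\mathrm{start}}$; $[\beta_0,\langle s,\beta,\bar d,b\rangle\leftrightarrow\langle n,\beta,\bar d,b\rangle,\langle w,\beta,\bar d,\bar b\rangle]_{\mathrm{end}}$; $[\beta_1,\langle n,\beta,\bar d,b\rangle\leftrightarrow\langle s,\beta,\bar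 d,b\rangle,\langle e,\beta,\bar d,\bar b\rangle]_{\mathrm{start}}$; $[\alpha,\langle s,\beta,\bar d,b\rangle\leftrightarrow\langle n,\beta,\bar d,b\rangle,\langle w,\alpha,\bar d,\bar b\rangle]_{\mathrm{end}}$; $[\beta_1,\langle w,\beta,d,b\rangle\leftrightarrow\langle e,\beta,\bar d,b\rangle,\langle s,\beta,d,\bar b\rangle]_{\mathrm{start}}$; $[\beta_0,\langle e,\beta,\bar d,b\rangle\leftrightarrow\langle w,\beta,\bar d,b\rangle,\langle n,\beta,\bar d,\bar b\rangle]_{\mathrm{end}}$; $[\beta_1,\langle w,\beta,\bar d,b\rangle\leftrightarrow\langle e,\beta,\bar d,b\rangle,\langle s,\beta,\bar d,\bar b\rangle]_{\mathrm{start}}$; $[\alpha,\langle e,\beta,\bar d,b\rangle\leftrightarrow\langle w,\beta,\bar d,b\rangle,\langle n,\alpha,\bar d,\bar b\rangle]_{\mathrm{end}}$; and, for all $X,Y\in\{d,\bar d\}$ and $\Theta,\Omega\in\{\alpha,\beta\}$, the rules $[\langle e,\Theta,X,\bar b\rangle,\langle s,\Omega,Y,\bar b\rangle\leftrightarrow\langle n,\Omega,X,\bar b\rangle,\langle w,\Theta,Y,\bar b\rangle]_{\mathrm{end}}$ and $[\langle w,\Theta,X,\bar b\rangle,\langle n,\Omega,Y,\bar b\rangle\leftrightarrow\langle s,\Omega,X,\bar b\rangle,\langle e,\Theta,Y,\bar b\rangle]_{\mathrm{start}}$. *)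

theory Defs
  imports Main
begin

text \<open>Labels of \<open>\<bar>S\<close>: \<open>None\<close> plays the role of the empty label, \<open>Some i\<close> the label \<open>i \<in> S\<close>.
  A green graph on vertex type \<open>'v\<close> is given by \<open>H :: nat option \<Rightarrow> 'v \<Rightarrow> 'v \<Rightarrow> bool\<close>,
  where \<open>H I x y\<close> is the atom \<open>H_I(x,y)\<close>.\<close>

type_synonym label = "nat option"

datatype rule =
    EndRule label label label label
  | StartRule label label label label

fun sat_rule :: "(label \<Rightarrow> 'v \<Rightarrow> 'v \<Rightarrow> bool) \<Rightarrow> rule \<Rightarrow> bool" where
  "sat_rule H (EndRule I1 I2 I3 I4) =
     (\<forall>x x'. (\<exists>y. H I1 x y \<and> H I2 x' y) \<longleftrightarrow> (\<exists>y. H I3 x y \<and> H I4 x' y))"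
| "sat_rule H (StartRule I1 I2 I3 I4) =
     (\<forall>y y'. (\<exists>x. H I1 x y \<and> H I2 x y') \<longleftrightarrow> (\<exists>x. H I3 x y \<and> H I4 x y'))"

definition models :: "(label \<Rightarrow> 'v \<Rightarrow> 'v \<Rightarrow> bool) \<Rightarrow> rule set \<Rightarrow> bool" where
  "models H T \<longleftrightarrow> (\<forall>r\<in>T. sat_rule H r)"

definition has_empty_edge :: "(label \<Rightarrow> 'v \<Rightarrow> 'v \<Rightarrow> bool) \<Rightarrow> bool" where
  "has_empty_edge H \<longleftrightarrow> (\<exists>x y. H None x y)"

definition has_12_pattern :: "(label \<Rightarrow> 'v \<Rightarrow> 'v \<Rightarrow> bool) \<Rightarrow> bool" where
  "has_12_pattern H \<longleftrightarrow> (\<exists>a a' b. H (Some 1) a b \<and> H (Some 2) a' b)"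

text \<open>Finitely leads to the red spider, for green graphs whose universe is the (finite) type \<open>'v\<close>.\<close>
definition leads_to_red_spider_on :: "'v itself \<Rightarrow> rule set \<Rightarrow> bool" where
  "leads_to_red_spider_on _ T \<longleftrightarrow>
     (\<forall>H :: label \<Rightarrow> 'v \<Rightarrow> 'v \<Rightarrow> bool. models H T \<and> has_empty_edge H \<longrightarrow> has_12_pattern H)"

text \<open>Codes \<open>\<langle>x,\<theta>,\<delta>,\<epsilon>\<rangle>\<close>: \<open>\<delta> = True\<close> means \<open>d\<close>, \<open>False\<close> means \<open>\<bar>d\<close>;
  \<open>\<epsilon> = True\<close> means \<open>b\<close>, \<open>False\<close> means \<open>\<bar>b\<close>.\<close>
datatype dir = DN | DE | DS | DW
datatype theta = TAlpha | TBeta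

definition T_inf :: "nat \<Rightarrow> nat \<Rightarrow> nat \<Rightarrow> nat \<Rightarrow> nat \<Rightarrow> rule set" where
  "T_inf \<alpha> \<beta>0 \<beta>1 \<eta>0 \<eta>1 =
     {EndRule None None (Some \<alpha>) (Some \<eta>1),
      StartRule None (Some \<eta>1) (Some \<eta>0) (Some \<beta>1),
      EndRule None (Some \<eta>0) (Some \<eta>1) (Some \<beta>0)}"

definition T_box :: "(dir \<Rightarrow> theta \<Rightarrow> bool \<Rightarrow> bool \<Rightarrow> nat) \<Rightarrow> nat \<Rightarrow> nat \<Rightarrow> nat \<Rightarrow> rule set" where
  "T_box c \<alpha> \<beta>0 \<beta>1 =
     (let C = (\<lambda>x t dl ep. Some (c x t dl ep)) in
     {EndRule (Some \<beta>0) (Some \<beta>0) (C DN TBeta True True) (C DW TBeta True True),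
      StartRule (Some \<beta>1) (C DN TBeta True True) (C DS TBeta False True) (C DE TBeta True False),
      EndRule (Some \<beta>0) (C DS TBeta False True) (C DN TBeta False True) (C DW TBeta False False),
      StartRule (Some \<beta>1) (C DN TBeta False True) (C DS TBeta False True) (C DE TBeta False False),
      EndRule (Some \<alpha>) (C DS TBeta False True) (C DN TBeta False True) (C DW TAlpha False False),
      StartRule (Some \<beta>1) (C DW TBeta True True) (C DE TBeta False True) (C DS TBeta True False),
      EndRule (Some \<beta>0) (C DE TBeta False True) (C DW TBeta False True) (C DN TBeta False False),
      StartRule (Some \<beta>1) (C DW TBeta False True) (C DE TBeta False True) (C DS TBeta False False),
      EndRule (Some \<alpha>) (C DE TBeta False True) (C DW TBeta False True) (C DN TAlpha False False)}
     \<union> {EndRule (C DE \<Theta> X False) (C DS \<Omega> Y False) (C DN \<Omega> X False) (C DW \<Theta> Y False)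
         | X Y \<Theta> \<Omega>. True}
     \<union> {StartRule (C DW \<Theta> X False) (C DN \<Omega> Y False) (C DS \<Omega> X False) (C DE \<Theta> Y False)
         | X Y \<Theta> \<Omega>. True})"

end

theory Submission
  imports Defs
begin

lemma end_fw: "sat_rule H (EndRule I1 I2 I3 I4) \<Longrightarrow> H I1 x y \<Longrightarrow> H I2 x' y \<Longrightarrow> \<exists>t. H I3 x t \<and> H I4 x' t"
  by auto

lemma start_fw: "sat_rule H (StartRule I1 I2 I3 I4) \<Longrightarrow> H I1 x y \<Longrightarrow> H I2 x y' \<Longrightarrow> \<exists>s. H I3 s y \<and> H I4 s y'"
  by auto

definition hE :: "(label \<Rightarrow> 'v \<Rightarrow> 'v \<Rightarrow> bool) \<Rightarrow> (dir \<Rightarrow> theta \<Rightarrow> bool \<Rightarrow> bool \<Rightarrow> nat) \<Rightarrow> nat \<Rightarrow> nat \<Rightarrow> 'v \<Rightarrow> 'v \<Rightarrow> theta \<Rightarrow> bool \<Rightarrow> bool" where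
  "hE H c p q u w th dl = (if odd (p+q) then H (Some (c DE th dl False)) u w else H (Some (c DW th dl False)) w u)"

definition vE :: "(label \<Rightarrow> 'v \<Rightarrow> 'v \<Rightarrow> bool) \<Rightarrow> (dir \<Rightarrow> theta \<Rightarrow> bool \<Rightarrow> bool \<Rightarrow> nat) \<Rightarrow> nat \<Rightarrow> nat \<Rightarrow> 'v \<Rightarrow> 'v \<Rightarrow> theta \<Rightarrow> bool \<Rightarrow> bool" where
  "vE H c p q u w om dl = (if odd (p+q) then H (Some (c DN om dl False)) u w else H (Some (c DS om dl False)) w u)"

locale spider =
  fixes H :: "label \<Rightarrow> 'v \<Rightarrow> 'v \<Rightarrow> bool" and c :: "dir \<Rightarrow> theta \<Rightarrow> bool \<Rightarrow> bool \<Rightarrow> nat"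
    and \<alpha> \<beta>0 \<beta>1 :: nat
  assumes sat: "\<forall>r\<in>T_box c \<alpha> \<beta>0 \<beta>1. sat_rule H r"
begin

lemma mem: "r \<in> T_box c \<alpha> \<beta>0 \<beta>1 \<Longrightarrow> sat_rule H r" using sat by blast

lemma r10: "H (Some (c DE Th X False)) x y \<Longrightarrow> H (Some (c DS Om Y False)) x' y \<Longrightarrow>
   \<exists>t. H (Some (c DN Om X False)) x t \<and> H (Some (c DW Th Y False)) x' t"
  by (rule end_fw[OF mem]) (auto simp: T_box_def)

lemma r11: "H (Some (c DW Th X False)) x y \<Longrightarrow> H (Some (c DN Om Y False)) x y' \<Longrightarrow>
   \<exists>s. H (Some (c DS Om X False)) s y \<and> H (Some (c DE Th Y False)) s y'"
  by (rule start_fw[OF mem]) (auto simp: T_box_def)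

lemma r1: "H (Some \<beta>0) x y \<Longrightarrow> \<exists>z. H (Some (c DN TBeta True True)) x z \<and> H (Some (c DW TBeta True True)) x z"
  by (rule end_fw[OF mem]) (auto simp: T_box_def)

lemma r24: assumes a: "H (Some \<beta>1) x y" "H (Some (c DN TBeta dl True)) x w" shows "
   \<exists>v. H (Some (c DS TBeta False True)) v y \<and> H (Some (c DE TBeta dl False)) v w"
proof -
  have m: "StartRule (Some \<beta>1) (Some (c DN TBeta dl True)) (Some (c DS TBeta False True)) (Some (c DE TBeta dl False)) \<in> T_box c \<alpha> \<beta>0 \<beta>1"
    by (cases dl) (simp_all add: T_box_def)
  show ?thesis using start_fw[OF mem[OF m] a] by blast
qed

lemma r3: "H (Some \<beta>0) x y \<Longrightarrow> H (Some (c DS TBeta False True)) v y \<Longrightarrow>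
   \<exists>w. H (Some (c DN TBeta False True)) x w \<and> H (Some (c DW TBeta False False)) v w"
  by (rule end_fw[OF mem]) (auto simp: T_box_def)

lemma r5: "H (Some \<alpha>) x y \<Longrightarrow> H (Some (c DS TBeta False True)) v y \<Longrightarrow>
   \<exists>w. H (Some (c DN TBeta False True)) x w \<and> H (Some (c DW TAlpha False False)) v w"
  by (rule end_fw[OF mem]) (auto simp: T_box_def)

lemma r68: assumes a: "H (Some \<beta>1) x y" "H (Some (c DW TBeta dl True)) x w" shows "
   \<exists>v. H (Some (c DE TBeta False True)) v y \<and> H (Some (c DS TBeta dl False)) v w"
proof -
  have m: "StartRule (Some \<beta>1) (Some (c DW TBeta dl True)) (Some (c DE TBeta False True)) (Some (c DS TBeta dl False)) \<in> T_box c \<alpha> \<beta>0 \<beta>1"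
    by (cases dl) (simp_all add: T_box_def)
  show ?thesis using start_fw[OF mem[OF m] a] by blast
qed

lemma r7: "H (Some \<beta>0) x y \<Longrightarrow> H (Some (c DE TBeta False True)) v y \<Longrightarrow>
   \<exists>w. H (Some (c DW TBeta False True)) x w \<and> H (Some (c DN TBeta False False)) v w"
  by (rule end_fw[OF mem]) (auto simp: T_box_def)

lemma r9: "H (Some \<alpha>) x y \<Longrightarrow> H (Some (c DE TBeta False True)) v y \<Longrightarrow>
   \<exists>w. H (Some (c DW TBeta False True)) x w \<and> H (Some (c DN TAlpha False False)) v w"
  by (rule end_fw[OF mem]) (auto simp: T_box_def)

lemma cell:
  assumes "hE H c p q u0 u1 th d1" "vE H c (Suc p) q u1 w1 om d2"
  shows "\<exists>w0. vE H c p q u0 w0 om d1 \<and> hE H c p (Suc q) w0 w1 th d2"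
proof (cases "odd (p+q)")
  case True
  with assms have a: "H (Some (c DE th d1 False)) u0 u1" "H (Some (c DS om d2 False)) w1 u1"
    by (auto simp: hE_def vE_def)
  from r10[OF a] obtain t where "H (Some (c DN om d1 False)) u0 t" "H (Some (c DW th d2 False)) w1 t" by blast
  with True show ?thesis by (auto simp: hE_def vE_def)
next
  case False
  with assms have a: "H (Some (c DW th d1 False)) u1 u0" "H (Some (c DN om d2 False)) u1 w1"
    by (auto simp: hE_def vE_def)
  from r11[OF a] obtain t where "H (Some (c DS om d1 False)) t u0" "H (Some (c DE th d2 False)) t w1" by blast
  with False show ?thesis by (auto simp: hE_def vE_def)
qed

lemma row_step:
  assumes row: "\<forall>p<M. hE H c p q (r p) (r (Suc p)) (th p) (D (p+q))"
    and top: "vE H c M q (r M) wt (om q) (D (M+q))"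
  shows "\<exists>r'. r' M = wt \<and> (\<forall>p<M. hE H c p (Suc q) (r' p) (r' (Suc p)) (th p) (D (p + Suc q)))
     \<and> (\<forall>p\<le>M. vE H c p q (r p) (r' p) (om q) (D (p+q)))"
proof -
  have "\<forall>k\<le>M. \<exists>r'. r' M = wt \<and> (\<forall>p. k \<le> p \<and> p<M \<longrightarrow> hE H c p (Suc q) (r' p) (r' (Suc p)) (th p) (D (p + Suc q)))
     \<and> (\<forall>p. k \<le> p \<and> p\<le>M \<longrightarrow> vE H c p q (r p) (r' p) (om q) (D (p+q)))"
  proof (intro allI impI)
    fix k assume "k \<le> M"
    then show "\<exists>r'. r' M = wt \<and> (\<forall>p. k \<le> p \<and> p<M \<longrightarrow> hE H c p (Suc q) (r' p) (r' (Suc p)) (th p) (D (p + Suc q)))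
     \<and> (\<forall>p. k \<le> p \<and> p\<le>M \<longrightarrow> vE H c p q (r p) (r' p) (om q) (D (p+q)))"
    proof (induction k rule: inc_induct)
      case base
      show ?case using top by (intro exI[of _ "\<lambda>_. wt"]) auto
    next
      case (step k)
      then obtain r' where r': "r' M = wt"
        "\<forall>p. Suc k \<le> p \<and> p<M \<longrightarrow> hE H c p (Suc q) (r' p) (r' (Suc p)) (th p) (D (p + Suc q))"
        "\<forall>p. Suc k \<le> p \<and> p\<le>M \<longrightarrow> vE H c p q (r p) (r' p) (om q) (D (p+q))" by blast
      have h1: "hE H c k q (r k) (r (Suc k)) (th k) (D (k+q))" using row step by auto
      have h2: "vE H c (Suc k) q (r (Suc k)) (r' (Suc k)) (om q) (D (Suc k+q))" using r'(3) step by auto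
      from cell[OF h1 h2] obtain w0 where w0: "vE H c k q (r k) w0 (om q) (D (k+q))"
        "hE H c k (Suc q) w0 (r' (Suc k)) (th k) (D (Suc k + q))" by blast
      show ?case
      proof (intro exI[of _ "r'(k := w0)"] conjI allI impI)
        show "(r'(k := w0)) M = wt" using r' step by auto
      next
        fix p assume p: "k \<le> p \<and> p < M"
        show "hE H c p (Suc q) ((r'(k := w0)) p) ((r'(k := w0)) (Suc p)) (th p) (D (p + Suc q))"
        proof (cases "p = k")
          case True thus ?thesis using w0 by simp
        next
          case False thus ?thesis using r'(2) p by auto
        qed
      next
        fix p assume p: "k \<le> p \<and> p \<le> M"
        show "vE H c p q (r p) ((r'(k := w0)) p) (om q) (D (p + q))"
        proof (cases "p = k")
          case True thus ?thesis using w0 by simp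
        next
          case False thus ?thesis using r'(3) p by auto
        qed
      qed
    qed
  qed
  from this[THEN spec[of _ 0]] show ?thesis by auto
qed

lemma grid:
  assumes row0: "\<forall>p<M. hE H c p 0 (r0 p) (r0 (Suc p)) (th p) (D p)"
    and col0: "col 0 = r0 M"
    and col: "\<forall>q<K. vE H c M q (col q) (col (Suc q)) (om q) (D (M+q))"
  shows "q \<le> K \<Longrightarrow> \<exists>r. r M = col q \<and> (\<forall>p<M. hE H c p q (r p) (r (Suc p)) (th p) (D (p+q)))"
proof (induction q)
  case 0 show ?case using row0 col0 by (intro exI[of _ r0]) auto
next
  case (Suc q)
  then obtain r where r: "r M = col q" "\<forall>p<M. hE H c p q (r p) (r (Suc p)) (th p) (D (p+q))" by auto
  have "vE H c M q (r M) (col (Suc q)) (om q) (D (M+q))" using col Suc r by auto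
  from row_step[where D=D and th=th and om=om and r=r, OF r(2) this] show ?case by auto
qed


lemma ray1:
  assumes b1: "\<forall>k. H (Some \<beta>1) (xs (Suc k)) (ys k)"
    and b0: "\<forall>k. H (Some \<beta>0) (xs (Suc k)) (ys (Suc k))"
    and al: "H (Some \<alpha>) a (ys 0)" and m: "1 \<le> m"
    and zN: "H (Some (c DN TBeta True True)) (xs m) z"
  shows "\<exists>r. r (2*m) = z \<and> (\<forall>p<2*m. hE H c p 0 (r p) (r (Suc p)) (if p = 0 then TAlpha else TBeta) (p = 2*m-1 \<or> p = 2*m))"
proof -
  have inv: "1 \<le> k \<longrightarrow> (\<exists>r. r (2*m) = z \<and> (\<forall>p. 2*k \<le> p \<and> p<2*m \<longrightarrow> hE H c p 0 (r p) (r (Suc p)) (if p = 0 then TAlpha else TBeta) (p = 2*m-1 \<or> p = 2*m))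
      \<and> H (Some (c DN TBeta (k = m) True)) (xs k) (r (2*k)))" if "k \<le> m" for k
    using that
  proof (induction k rule: inc_induct)
    case base
    show ?case using zN by (intro impI exI[of _ "\<lambda>_. z"]) auto
  next
    case (step n)
    show ?case
    proof
      assume n1: "1 \<le> n"
      from step obtain r where r: "r (2*m) = z"
        "\<forall>p. 2*Suc n \<le> p \<and> p<2*m \<longrightarrow> hE H c p 0 (r p) (r (Suc p)) (if p = 0 then TAlpha else TBeta) (p = 2*m-1 \<or> p = 2*m)"
        "H (Some (c DN TBeta (Suc n = m) True)) (xs (Suc n)) (r (2*Suc n))" by auto
      from r24[OF b1[rule_format, of n] r(3)] obtain v where v:
        "H (Some (c DS TBeta False True)) v (ys n)" "H (Some (c DE TBeta (Suc n = m) False)) v (r (2*Suc n))" by blast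
      have "H (Some \<beta>0) (xs n) (ys n)" using b0[rule_format, of "n-1"] n1 by simp
      from r3[OF this v(1)] obtain w where w: "H (Some (c DW TBeta False False)) v w"
        "H (Some (c DN TBeta False True)) (xs n) w" by blast
      define r' where "r' = r(2*n+1 := v, 2*n := w)"
      have e1: "hE H c (2*n) 0 (r' (2*n)) (r' (Suc (2*n))) (if 2*n = 0 then TAlpha else TBeta) (2*n = 2*m-1 \<or> 2*n = 2*m)"
      proof -
        have "(2*n = 2*m-1) = False" "(2*n = 2*m) = False" using step(2) by arith+
        thus ?thesis using w n1 step(2) by (simp add: r'_def hE_def)
      qed
      have e2: "hE H c (Suc (2*n)) 0 (r' (Suc (2*n))) (r' (Suc (Suc (2*n)))) (if Suc (2*n) = 0 then TAlpha else TBeta) (Suc (2*n) = 2*m-1 \<or> Suc (2*n) = 2*m)"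
      proof -
        have "(Suc (2*n) = 2*m-1 \<or> Suc (2*n) = 2*m) = (Suc n = m)" by arith
        thus ?thesis using v(2) by (simp add: r'_def hE_def)
      qed
      show "\<exists>r. r (2*m) = z \<and> (\<forall>p. 2*n \<le> p \<and> p<2*m \<longrightarrow> hE H c p 0 (r p) (r (Suc p)) (if p = 0 then TAlpha else TBeta) (p = 2*m-1 \<or> p = 2*m))
      \<and> H (Some (c DN TBeta (n = m) True)) (xs n) (r (2*n))"
      proof (intro exI[of _ r'] conjI allI impI)
        show "r' (2*m) = z" using r step(2) by (simp add: r'_def)
        show "H (Some (c DN TBeta (n = m) True)) (xs n) (r' (2*n))" using w step(2)
          by (simp add: r'_def)
      next
        fix p assume p: "2*n \<le> p \<and> p<2*m"
        show "hE H c p 0 (r' p) (r' (Suc p)) (if p = 0 then TAlpha else TBeta) (p = 2*m-1 \<or> p = 2*m)"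
        proof -
          consider "p = 2*n" | "p = Suc (2*n)" | "2 * Suc n \<le> p" using p by (cases "p = 2*n \<or> p = Suc (2*n)") auto
          thus ?thesis
          proof cases
            case 1 thus ?thesis using e1 by simp
          next
            case 2 thus ?thesis using e2 by simp
          next
            case 3
            hence "r' p = r p" "r' (Suc p) = r (Suc p)" by (auto simp: r'_def)
            thus ?thesis using r(2) 3 p by auto
          qed
        qed
      qed
    qed
  qed
  obtain r where r: "r (2*m) = z"
        "\<forall>p. 2 \<le> p \<and> p<2*m \<longrightarrow> hE H c p 0 (r p) (r (Suc p)) (if p = 0 then TAlpha else TBeta) (p = 2*m-1 \<or> p = 2*m)"
        "H (Some (c DN TBeta (1 = m) True)) (xs 1) (r 2)" using inv[of 1] m by auto
  from r24[OF b1[rule_format, of 0]] r(3) obtain v where v: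
        "H (Some (c DS TBeta False True)) v (ys 0)" "H (Some (c DE TBeta (1 = m) False)) v (r 2)" by auto
  from r5[OF al v(1)] obtain w where w: "H (Some (c DW TAlpha False False)) v w" by blast
  define r' where "r' = r(1 := v, 0 := w)"
  show ?thesis
  proof (intro exI[of _ r'] conjI allI impI)
    show "r' (2*m) = z" using r m by (simp add: r'_def)
  next
    fix p assume p: "p < 2*m"
    consider "p = 0" | "p = 1" | "2 \<le> p" by arith
    thus "hE H c p 0 (r' p) (r' (Suc p)) (if p = 0 then TAlpha else TBeta) (p = 2*m-1 \<or> p = 2*m)"
    proof cases
      case 1 thus ?thesis using w m by (simp add: r'_def hE_def)
    next
      case 2
      have "(1 = 2*m-1 \<or> 1 = 2*m) = (1 = m)" by arith
      thus ?thesis using v(2) 2 by (simp add: r'_def hE_def numeral_2_eq_2)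
    next
      case 3
      hence "r' p = r p" "r' (Suc p) = r (Suc p)" by (auto simp: r'_def)
      thus ?thesis using r(2) 3 p by auto
    qed
  qed
qed


lemma ray2:
  assumes b1: "\<forall>k. H (Some \<beta>1) (xs (Suc k)) (ys k)"
    and b0: "\<forall>k. H (Some \<beta>0) (xs (Suc k)) (ys (Suc k))"
    and al: "H (Some \<alpha>) a (ys 0)" and n: "1 \<le> n"
    and zW: "H (Some (c DW TBeta True True)) (xs n) z" and M: "even M"
  shows "\<exists>col. col 0 = z \<and> (\<forall>q<2*n. vE H c M q (col q) (col (Suc q)) (if q = 2*n-1 then TAlpha else TBeta) (q = 0))"
proof -
  have inv: "1 \<le> k \<longrightarrow> (\<exists>col. col 0 = z \<and> (\<forall>q<2*(n-k). vE H c M q (col q) (col (Suc q)) (if q = 2*n-1 then TAlpha else TBeta) (q = 0))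
      \<and> H (Some (c DW TBeta (k = n) True)) (xs k) (col (2*(n-k))))" if "k \<le> n" for k
    using that
  proof (induction k rule: inc_induct)
    case base
    show ?case using zW by (intro impI exI[of _ "\<lambda>_. z"]) auto
  next
    case (step k)
    show ?case
    proof
      assume k1: "1 \<le> k"
      define P where "P = 2*(n - Suc k)"
      have P2: "2*(n-k) = Suc (Suc P)" using step(2) by (simp add: P_def)
      from step obtain col where col: "col 0 = z"
        "\<forall>q<P. vE H c M q (col q) (col (Suc q)) (if q = 2*n-1 then TAlpha else TBeta) (q = 0)"
        "H (Some (c DW TBeta (Suc k = n) True)) (xs (Suc k)) (col P)" by (auto simp: P_def)
      from r68[OF b1[rule_format, of k] col(3)] obtain v where v:
        "H (Some (c DE TBeta False True)) v (ys k)" "H (Some (c DS TBeta (Suc k = n) False)) v (col P)" by blast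
      have "H (Some \<beta>0) (xs k) (ys k)" using b0[rule_format, of "k-1"] k1 by simp
      from r7[OF this v(1)] obtain w where w: "H (Some (c N' TBeta False False)) v w"
        "H (Some (c DW TBeta False True)) (xs k) w" if "N' = DN" for N' by blast
      define col' where "col' = col(Suc P := v, Suc (Suc P) := w)"
      have e1: "vE H c M P (col' P) (col' (Suc P)) (if P = 2*n-1 then TAlpha else TBeta) (P = 0)"
      proof -
        have "(P = 2*n-1) = False" "(P = 0) = (Suc k = n)" using step(2) by (auto simp: P_def)
        thus ?thesis using v M by (simp add: col'_def vE_def P_def)
      qed
      have e2: "vE H c M (Suc P) (col' (Suc P)) (col' (Suc (Suc P))) (if Suc P = 2*n-1 then TAlpha else TBeta) (Suc P = 0)"
      proof -
        have "(Suc P = 2*n-1) = False" using step(2) k1 by (auto simp: P_def)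
        thus ?thesis using w M by (simp add: col'_def vE_def P_def)
      qed
      show "\<exists>col. col 0 = z \<and> (\<forall>q<2*(n-k). vE H c M q (col q) (col (Suc q)) (if q = 2*n-1 then TAlpha else TBeta) (q = 0))
      \<and> H (Some (c DW TBeta (k = n) True)) (xs k) (col (2*(n-k)))"
      proof (intro exI[of _ col'] conjI allI impI)
        show "col' 0 = z" using col by (simp add: col'_def)
        show "H (Some (c DW TBeta (k = n) True)) (xs k) (col' (2*(n-k)))" using w step(2) P2
          by (simp add: col'_def)
      next
        fix q assume q: "q < 2*(n-k)"
        show "vE H c M q (col' q) (col' (Suc q)) (if q = 2*n-1 then TAlpha else TBeta) (q = 0)"
        proof -
          consider "q = P" | "q = Suc P" | "q < P" using q P2 by (cases "q = P \<or> q = Suc P") auto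
          thus ?thesis
          proof cases
            case 1 thus ?thesis using e1 by simp
          next
            case 2 thus ?thesis using e2 by simp
          next
            case 3
            hence "col' q = col q" "col' (Suc q) = col (Suc q)" by (auto simp: col'_def)
            thus ?thesis using col(2) 3 by auto
          qed
        qed
      qed
    qed
  qed
  define P where "P = 2*(n - 1)"
  obtain col where col: "col 0 = z"
        "\<forall>q<P. vE H c M q (col q) (col (Suc q)) (if q = 2*n-1 then TAlpha else TBeta) (q = 0)"
        "H (Some (c DW TBeta (1 = n) True)) (xs 1) (col P)" using inv[of 1] n by (auto simp: P_def)
  from r68[OF b1[rule_format, of 0]] col(3) obtain v where v:
        "H (Some (c DE TBeta False True)) v (ys 0)" "H (Some (c DS TBeta (1 = n) False)) v (col P)" by auto
  from r9[OF al v(1)] obtain w where w: "H (Some (c DN TAlpha False False)) v w" by blast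
  define col' where "col' = col(Suc P := v, Suc (Suc P) := w)"
  have P2: "2*n = Suc (Suc P)" using n by (simp add: P_def)
  show ?thesis
  proof (intro exI[of _ col'] conjI allI impI)
    show "col' 0 = z" using col by (simp add: col'_def)
  next
    fix q assume q: "q < 2*n"
    consider "q = P" | "q = Suc P" | "q < P" using q P2 by (cases "q = P \<or> q = Suc P") auto
    thus "vE H c M q (col' q) (col' (Suc q)) (if q = 2*n-1 then TAlpha else TBeta) (q = 0)"
    proof cases
      case 1
      have "(P = 2*n-1) = False" "(P = 0) = (1 = n)" using n by (auto simp: P_def)
      thus ?thesis using v M 1 by (simp add: col'_def vE_def P_def)
    next
      case 2
      have a: "Suc P = 2*n-1" "Suc P \<noteq> 0" "odd (M + Suc P)" using n M by (auto simp: P_def)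
      have b: "col' (Suc P) = v" "col' (Suc (Suc P)) = w" by (auto simp: col'_def)
      show ?thesis unfolding 2 vE_def b using a w by simp
    next
      case 3
      hence "col' q = col q" "col' (Suc q) = col (Suc q)" by (auto simp: col'_def)
      thus ?thesis using col(2) 3 by auto
    qed
  qed
qed

end

theorem mainTheorem5:
  fixes s \<alpha> \<beta>0 \<beta>1 \<eta>0 \<eta>1 :: nat
    and c :: "dir \<Rightarrow> theta \<Rightarrow> bool \<Rightarrow> bool \<Rightarrow> nat"
  assumes labels: "{\<alpha>, \<beta>0, \<beta>1, \<eta>0, \<eta>1} \<subseteq> {1..s} - {1, 2, 3, 4}"
    and evens: "even \<alpha>" "even \<beta>0" "even \<eta>0"
    and distinct_evens: "\<alpha> \<noteq> \<beta>0" "\<alpha> \<noteq> \<eta>0" "\<beta>0 \<noteq> \<eta>0"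
    and odds: "odd \<beta>1" "odd \<eta>1" and distinct_odds: "\<beta>1 \<noteq> \<eta>1"
    and code_inj: "inj c"
    and code_range: "\<And>x t dl ep. c x t dl ep \<in> {1..s} - {3, 4, \<alpha>, \<beta>0, \<beta>1, \<eta>0, \<eta>1}"
    and code1: "c DN TAlpha False False = 1"
    and code2: "c DW TAlpha False False = 2"
  shows "leads_to_red_spider_on TYPE('v::finite) (T_inf \<alpha> \<beta>0 \<beta>1 \<eta>0 \<eta>1 \<union> T_box c \<alpha> \<beta>0 \<beta>1)"
  unfolding leads_to_red_spider_on_def
proof (intro allI impI)
  fix H :: "label \<Rightarrow> 'v \<Rightarrow> 'v \<Rightarrow> bool"
  assume "models H (T_inf \<alpha> \<beta>0 \<beta>1 \<eta>0 \<eta>1 \<union> T_box c \<alpha> \<beta>0 \<beta>1) \<and> has_empty_edge H"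
  hence mo: "\<forall>r\<in>T_inf \<alpha> \<beta>0 \<beta>1 \<eta>0 \<eta>1 \<union> T_box c \<alpha> \<beta>0 \<beta>1. sat_rule H r" and ee: "has_empty_edge H"
    by (auto simp: models_def)
  interpret spider H c \<alpha> \<beta>0 \<beta>1 using mo by unfold_locales blast
  from ee obtain a b where ab: "H None a b" by (auto simp: has_empty_edge_def)
  have sA: "sat_rule H (EndRule None None (Some \<alpha>) (Some \<eta>1))"
   and sB: "sat_rule H (StartRule None (Some \<eta>1) (Some \<eta>0) (Some \<beta>1))"
   and sC: "sat_rule H (EndRule None (Some \<eta>0) (Some \<eta>1) (Some \<beta>0))"
    using mo by (auto simp: T_inf_def)
  from end_fw[OF sA ab ab] obtain y0 where y0: "H (Some \<alpha>) a y0" "H (Some \<eta>1) a y0" by blast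
  have "\<forall>y. \<exists>x. H (Some \<eta>1) a y \<longrightarrow> H (Some \<eta>0) x b \<and> H (Some \<beta>1) x y"
    using start_fw[OF sB ab] by blast
  then obtain f where f: "\<And>y. H (Some \<eta>1) a y \<Longrightarrow> H (Some \<eta>0) (f y) b \<and> H (Some \<beta>1) (f y) y"
    by metis
  have "\<forall>x. \<exists>y. H (Some \<eta>0) x b \<longrightarrow> H (Some \<eta>1) a y \<and> H (Some \<beta>0) x y"
    using end_fw[OF sC ab] by blast
  then obtain g where g: "\<And>x. H (Some \<eta>0) x b \<Longrightarrow> H (Some \<eta>1) a (g x) \<and> H (Some \<beta>0) x (g x)"
    by metis
  define ys where "ys k = ((g \<circ> f) ^^ k) y0" for k
  define xs where "xs k = f (ys (k - 1))" for k
  have eta: "H (Some \<eta>1) a (ys k)" for k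
  proof (induction k)
    case 0 thus ?case using y0 by (simp add: ys_def)
  next
    case (Suc k) thus ?case using f g by (simp add: ys_def)
  qed
  have b1: "\<forall>k. H (Some \<beta>1) (xs (Suc k)) (ys k)" using f eta by (simp add: xs_def)
  have b0: "\<forall>k. H (Some \<beta>0) (xs (Suc k)) (ys (Suc k))" using f g eta by (simp add: xs_def ys_def)
  have al: "H (Some \<alpha>) a (ys 0)" using y0 by (simp add: ys_def)
  have "\<not> inj (\<lambda>k. xs (Suc k))"
  proof
    assume "inj (\<lambda>k. xs (Suc k))"
    moreover have "finite (range (\<lambda>k. xs (Suc k)))" by simp
    ultimately have "finite (UNIV :: nat set)" using finite_imageD by blast
    thus False by simp
  qed
  then obtain i j where ij: "i \<noteq> j" "xs (Suc i) = xs (Suc j)" unfolding inj_def by blast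
  define m where "m = Suc i"
  define n where "n = Suc j"
  have mn: "m \<noteq> n" "1 \<le> m" "1 \<le> n" "xs m = xs n" using ij by (auto simp: m_def n_def)
  from r1[OF b0[rule_format, of i]] obtain z where z:
    "H (Some (c DN TBeta True True)) (xs m) z" "H (Some (c DW TBeta True True)) (xs n) z"
    using mn by (auto simp: m_def)
  from ray1[OF b1 b0 al mn(2) z(1)] obtain r0 where r0: "r0 (2*m) = z"
    "\<forall>p<2*m. hE H c p 0 (r0 p) (r0 (Suc p)) (if p = 0 then TAlpha else TBeta) (p = 2*m-1 \<or> p = 2*m)" by blast
  from ray2[OF b1 b0 al mn(3) z(2), of "2*m"] obtain col where col: "col 0 = z"
    "\<forall>q<2*n. vE H c (2*m) q (col q) (col (Suc q)) (if q = 2*n-1 then TAlpha else TBeta) (q = 0)" by auto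
  define D where "D = (\<lambda>s::nat. s = 2*m-1 \<or> s = 2*m)"
  define th where "th = (\<lambda>p::nat. if p = 0 then TAlpha else TBeta)"
  define om where "om = (\<lambda>q::nat. if q = 2*n-1 then TAlpha else TBeta)"
  have row0: "\<forall>p<2*m. hE H c p 0 (r0 p) (r0 (Suc p)) (th p) (D p)" using r0 by (simp add: D_def th_def)
  have colD: "\<forall>q<2*n. vE H c (2*m) q (col q) (col (Suc q)) (om q) (D (2*m+q))"
  proof (intro allI impI)
    fix q assume "q < 2*n"
    moreover have "D (2*m+q) = (q = 0)" using mn by (auto simp: D_def)
    ultimately show "vE H c (2*m) q (col q) (col (Suc q)) (om q) (D (2*m+q))" using col by (simp add: om_def)
  qed
  have "\<exists>r. r (2*m) = col (2*n-1) \<and> (\<forall>p<2*m. hE H c p (2*n-1) (r p) (r (Suc p)) (th p) (D (p+(2*n-1))))"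
    using grid[OF row0 _ colD, of "2*n-1"] r0 col by auto
  then obtain r where r: "r (2*m) = col (2*n-1)" "\<forall>p<2*m. hE H c p (2*n-1) (r p) (r (Suc p)) (th p) (D (p+(2*n-1)))"
    by blast
  have "vE H c (2*m) (2*n-1) (r (2*m)) (col (Suc (2*n-1))) (om (2*n-1)) (D (2*m+(2*n-1)))"
  proof -
    have e: "Suc (2*n-1) = 2*n" "2*n-1 < 2*n" using mn by auto
    show ?thesis using colD[rule_format, OF e(2)] r(1) unfolding e(1) by simp
  qed
  from row_step[where D=D and th=th and om=om and r=r, OF r(2) this] obtain r' where r':
    "\<forall>p<2*m. hE H c p (Suc (2*n-1)) (r' p) (r' (Suc p)) (th p) (D (p + Suc (2*n-1)))"
    "\<forall>p\<le>2*m. vE H c p (2*n-1) (r p) (r' p) (om (2*n-1)) (D (p+(2*n-1)))" by blast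
  have h1: "hE H c 0 (Suc (2*n-1)) (r' 0) (r' 1) TAlpha (D (Suc (2*n-1)))" using r'(1)[rule_format, of 0] mn by (simp add: th_def)
  have h2: "vE H c 0 (2*n-1) (r 0) (r' 0) TAlpha (D (2*n-1))" using r'(2) by (auto simp: om_def)
  have d1: "D (Suc (2*n-1)) = False" "D (2*n-1) = False" using mn by (auto simp: D_def)
  have p1: "odd (2*n-1)" "\<not> odd (Suc (2*n-1))" using mn by auto
  have "H (Some 2) (r' 1) (r' 0)" using h1 d1 p1 code2 by (simp add: hE_def)
  moreover have "H (Some 1) (r 0) (r' 0)" using h2 d1 p1 code1 by (simp add: vE_def)
  ultimately show "has_12_pattern H" unfolding has_12_pattern_def by blast
qed

end
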